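(* Let $S$ be a set of patterns such that either no $\pi\in S$ begins with $1$, or no $\pi\in S$ begins with its largest element. Let $f_n(S)$ and $t_n(S)$ denote the number of rooted labeled forests and rooted labeled trees on $[n]$ avoiding $S$. Then $\lim_{n\to\infty}\frac{f_n(S)^{1/n}}{n}$ and $\lim_{n\to\infty}\frac{t_n(S)^{1/n}}{n}$ exist and are equal.
   Context: A rooted labeled forest on $[n]$ is an unordered forest on $n$ vertices, each component with a distinguished root, with distinct labels from $[n]$; a rooted labeled tree is a connected one. A pattern of length $k$ is a permutation $\pi$ of $[k]$; it begins with its largest element if $\pi(1)=k$. An instance of $\pi$ is a sequence of vertices $v_1,\dots,v_k$ with $v_i$ a strict ancestor of $v_{i+1}$ whose labels are in the same relative order as $\pi$; a forest avoids $S$ if it contains no instance of any pattern in $S$. *)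

theory Defs
  imports Complex_Main
begin

text \<open>A rooted labeled forest on [n] = {1..n} is encoded by its parent map
  par :: nat \<Rightarrow> nat option: roots have parent None, every vertex outside [n]
  has parent None, parents lie in [n], and the parent relation is acyclic.\<close>

definition parent_rel :: "(nat \<Rightarrow> nat option) \<Rightarrow> (nat \<times> nat) set" where
  "parent_rel par = {(v, u). par v = Some u}"

definition is_forest :: "nat \<Rightarrow> (nat \<Rightarrow> nat option) \<Rightarrow> bool" where
  "is_forest n par \<longleftrightarrow>
     (\<forall>v. v \<notin> {1..n} \<longrightarrow> par v = None) \<and>
     (\<forall>v u. par v = Some u \<longrightarrow> u \<in> {1..n}) \<and>
     acyclic (parent_rel par)"

definition is_tree :: "nat \<Rightarrow> (nat \<Rightarrow> nat option) \<Rightarrow> bool" where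
  "is_tree n par \<longleftrightarrow> is_forest n par \<and> card {v \<in> {1..n}. par v = None} = 1"

definition strict_anc :: "(nat \<Rightarrow> nat option) \<Rightarrow> nat \<Rightarrow> nat \<Rightarrow> bool" where
  "strict_anc par u v \<longleftrightarrow> (v, u) \<in> (parent_rel par)\<^sup>+"

text \<open>A pattern of length k is a permutation of [k], given as the list [pi(1),...,pi(k)].\<close>
definition is_pattern :: "nat list \<Rightarrow> bool" where
  "is_pattern pat \<longleftrightarrow> length pat \<ge> 1 \<and> distinct pat \<and> set pat = {1..length pat}"

definition is_instance :: "nat \<Rightarrow> (nat \<Rightarrow> nat option) \<Rightarrow> nat list \<Rightarrow> nat list \<Rightarrow> bool" where
  "is_instance n par pat vs \<longleftrightarrow>
     length vs = length pat \<and> set vs \<subseteq> {1..n} \<and>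
     (\<forall>i. i + 1 < length vs \<longrightarrow> strict_anc par (vs ! i) (vs ! (i + 1))) \<and>
     (\<forall>i j. i < length vs \<longrightarrow> j < length vs \<longrightarrow> (vs ! i < vs ! j \<longleftrightarrow> pat ! i < pat ! j))"

definition avoids :: "nat \<Rightarrow> (nat \<Rightarrow> nat option) \<Rightarrow> nat list set \<Rightarrow> bool" where
  "avoids n par S \<longleftrightarrow> (\<forall>pat \<in> S. \<forall>vs. \<not> is_instance n par pat vs)"

definition f_count :: "nat list set \<Rightarrow> nat \<Rightarrow> nat" where
  "f_count S n = card {par. is_forest n par \<and> avoids n par S}"

definition t_count :: "nat list set \<Rightarrow> nat \<Rightarrow> nat" where
  "t_count S n = card {par. is_tree n par \<and> avoids n par S}"

end

theory Submission
  imports Defs "HOL-Library.FuncSet" "HOL-Real_Asymp.Real_Asymp"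
begin

definition forest_on :: "nat set \<Rightarrow> (nat \<Rightarrow> nat option) \<Rightarrow> bool" where
  "forest_on V par \<longleftrightarrow>
     (\<forall>v. v \<notin> V \<longrightarrow> par v = None) \<and>
     (\<forall>v u. par v = Some u \<longrightarrow> u \<in> V) \<and>
     acyclic (parent_rel par)"

definition inst_on :: "nat set \<Rightarrow> (nat \<Rightarrow> nat option) \<Rightarrow> nat list \<Rightarrow> nat list \<Rightarrow> bool" where
  "inst_on V par pat vs \<longleftrightarrow>
     length vs = length pat \<and> set vs \<subseteq> V \<and>
     (\<forall>i. i + 1 < length vs \<longrightarrow> strict_anc par (vs ! i) (vs ! (i + 1))) \<and>
     (\<forall>i j. i < length vs \<longrightarrow> j < length vs \<longrightarrow> (vs ! i < vs ! j \<longleftrightarrow> pat ! i < pat ! j))"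

definition avoids_on :: "nat set \<Rightarrow> (nat \<Rightarrow> nat option) \<Rightarrow> nat list set \<Rightarrow> bool" where
  "avoids_on V par S \<longleftrightarrow> (\<forall>pat \<in> S. \<forall>vs. \<not> inst_on V par pat vs)"

definition FS :: "nat list set \<Rightarrow> nat set \<Rightarrow> (nat \<Rightarrow> nat option) set" where
  "FS S V = {par. forest_on V par \<and> avoids_on V par S}"

lemma f_count_FS: "f_count S n = card (FS S {1..n})"
  unfolding f_count_def FS_def is_forest_def forest_on_def avoids_def avoids_on_def
    is_instance_def inst_on_def by (rule refl)

lemma t_count_eq: "t_count S n = card {par. par \<in> FS S {1..n} \<and> card {v \<in> {1..n}. par v = None} = 1}"
  unfolding t_count_def FS_def is_tree_def is_forest_def forest_on_def avoids_def avoids_on_def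
    is_instance_def inst_on_def by (intro arg_cong[where f=card] Collect_cong) blast

lemma finite_forests:
  assumes "finite V"
  shows "finite {par. forest_on V par}"
proof -
  have "{par. forest_on V par} \<subseteq> {f. \<forall>x. (x \<in> V \<longrightarrow> f x \<in> insert None (Some ` V)) \<and> (x \<notin> V \<longrightarrow> f x = None)}"
  proof (intro subsetI CollectI allI conjI impI)
    fix f x assume f: "f \<in> {par. forest_on V par}"
    show "x \<notin> V \<Longrightarrow> f x = None" using f by (simp add: forest_on_def)
    show "x \<in> V \<Longrightarrow> f x \<in> insert None (Some ` V)"
    proof (cases "f x")
      case (Some u) then have "u \<in> V" using f unfolding forest_on_def by blast
      then show ?thesis using Some by blast
    qed simp
  qed
  moreover have "finite {f. \<forall>x. (x \<in> V \<longrightarrow> f x \<in> insert None (Some ` V)) \<and> (x \<notin> V \<longrightarrow> f x = None)}"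
    using finite_set_of_finite_funs[of V "insert None (Some ` V)" None] assms by blast
  ultimately show ?thesis by (rule finite_subset)
qed

lemma finite_FS: "finite V \<Longrightarrow> finite (FS S V)"
  unfolding FS_def by (rule finite_subset[OF _ finite_forests]) auto

lemma FS_None: "par \<in> FS S V \<Longrightarrow> v \<notin> V \<Longrightarrow> par v = None"
  unfolding FS_def forest_on_def by blast

lemma FS_Some: "par \<in> FS S V \<Longrightarrow> par v = Some u \<Longrightarrow> u \<in> V"
  unfolding FS_def forest_on_def by blast

lemma card_forests_le:
  assumes "finite V"
  shows "card (FS S V) \<le> (card V + 1) ^ card V"
proof -
  have inj: "inj_on (\<lambda>par. restrict par V) (FS S V)"
  proof (rule inj_onI)
    fix x y assume xy: "x \<in> FS S V" "y \<in> FS S V" and e: "restrict x V = restrict y V"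
    show "x = y"
    proof
      fix v show "x v = y v"
      proof (cases "v \<in> V")
        case True then show ?thesis using fun_cong[OF e, of v] by (simp only: restrict_apply')
      next
        case False then show ?thesis using FS_None[OF xy(1) False] FS_None[OF xy(2) False] by simp
      qed
    qed
  qed
  have sub: "(\<lambda>par. restrict par V) ` FS S V \<subseteq> (\<Pi>\<^sub>E i \<in> V. insert None (Some ` V))"
  proof
    fix g assume "g \<in> (\<lambda>par. restrict par V) ` FS S V"
    then obtain par where g: "g = restrict par V" and p: "par \<in> FS S V" by blast
    have pv: "par v \<in> insert None (Some ` V)" for v
    proof (cases "par v")
      case (Some u) then have "u \<in> V" using FS_Some[OF p] by blast
      then show ?thesis using Some by blast
    qed simp
    show "g \<in> (\<Pi>\<^sub>E i \<in> V. insert None (Some ` V))" unfolding g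
      using pv by (simp add: restrict_PiE_iff)
  qed
  have fin: "finite (\<Pi>\<^sub>E i \<in> V. insert None (Some ` V))"
    using assms by (intro finite_PiE) auto
  have "card (FS S V) = card ((\<lambda>par. restrict par V) ` FS S V)"
    using inj by (simp only: card_image)
  also have "\<dots> \<le> card (\<Pi>\<^sub>E i \<in> V. insert None (Some ` V))"
    by (rule card_mono[OF fin sub])
  also have "\<dots> = (\<Prod>i\<in>V. card (insert None (Some ` V)))"
    using assms by (rule card_PiE)
  also have "card (insert None (Some ` V)) = card V + 1"
    using assms by (simp add: card_image)
  finally show ?thesis by simp
qed

lemma empty_in_FS:
  assumes "\<forall>pat\<in>S. length pat \<ge> 2"
  shows "(\<lambda>_. None) \<in> FS S V"
proof -
  have pr: "parent_rel (\<lambda>_. None) = {}" by (simp add: parent_rel_def)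
  have f: "forest_on V (\<lambda>_. None)" unfolding forest_on_def pr by (simp add: acyclic_def)
  have a: "\<not> inst_on V (\<lambda>_. None) pat vs" if "pat \<in> S" for pat vs
  proof
    assume h: "inst_on V (\<lambda>_. None) pat vs"
    then have "2 \<le> length vs" using assms that by (simp add: inst_on_def)
    then have "0 + 1 < length vs" by simp
    then have "strict_anc (\<lambda>_. None) (vs ! 0) (vs ! (0+1))" using h unfolding inst_on_def by blast
    then show False by (simp add: strict_anc_def pr)
  qed
  show ?thesis using f a unfolding FS_def avoids_on_def by blast
qed

lemma trancl_image_inj:
  assumes inj: "inj_on f (Domain R \<union> Range R)" and pq: "(p,q) \<in> ((\<lambda>(x,y). (f x, f y)) ` R)\<^sup>+"
  shows "\<exists>a b. p = f a \<and> q = f b \<and> (a,b) \<in> R\<^sup>+"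
  using pq
proof (induction rule: trancl_induct)
  case (base y)
  then obtain a b where "(a,b) \<in> R" "p = f a" "y = f b" by auto
  then show ?case by blast
next
  case (step y z)
  from step.IH obtain a b where ab: "p = f a" "y = f b" "(a,b) \<in> R\<^sup>+" by blast
  from step.hyps(2) obtain c d where cd: "(c,d) \<in> R" "y = f c" "z = f d" by auto
  have "b \<in> Range R" using ab(3) by (meson Range.intros tranclD2)
  moreover have "c \<in> Domain R" using cd by blast
  ultimately have "b = c" using inj ab(2) cd(2) by (auto dest: inj_onD)
  then have "(a,d) \<in> R\<^sup>+" using ab(3) cd(1) by auto
  then show ?case using ab cd by blast
qed

lemma trancl_image_mono:
  assumes "(a,b) \<in> R\<^sup>+"
  shows "(f a, f b) \<in> ((\<lambda>(x,y). (f x, f y)) ` R)\<^sup>+"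
  using assms
proof (induction rule: trancl_induct)
  case (base y) then show ?case by (auto intro!: r_into_trancl)
next
  case (step y z)
  then have "(f y, f z) \<in> (\<lambda>(x,y). (f x, f y)) ` R" by force
  then show ?case using step.IH by (meson trancl.trancl_into_trancl)
qed

definition relab :: "(nat \<Rightarrow> nat) \<Rightarrow> nat set \<Rightarrow> nat set \<Rightarrow> (nat \<Rightarrow> nat option) \<Rightarrow> nat \<Rightarrow> nat option" where
  "relab \<sigma> V W par = (\<lambda>w. if w \<in> W then map_option \<sigma> (par (inv_into V \<sigma> w)) else None)"

lemma forest_rel_sub: "forest_on V par \<Longrightarrow> parent_rel par \<subseteq> V \<times> V"
  unfolding forest_on_def parent_rel_def by auto

lemma rel_relab:
  assumes f: "forest_on V par" and bij: "bij_betw \<sigma> V W"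
  shows "parent_rel (relab \<sigma> V W par) = (\<lambda>(x,y). (\<sigma> x, \<sigma> y)) ` parent_rel par"
proof
  show "parent_rel (relab \<sigma> V W par) \<subseteq> (\<lambda>(x,y). (\<sigma> x, \<sigma> y)) ` parent_rel par"
  proof
    fix e assume "e \<in> parent_rel (relab \<sigma> V W par)"
    then obtain w u where e: "e = (w,u)" and h: "relab \<sigma> V W par w = Some u"
      unfolding parent_rel_def by auto
    then have w: "w \<in> W" unfolding relab_def by (auto split: if_splits)
    with h obtain x where x: "par (inv_into V \<sigma> w) = Some x" "u = \<sigma> x"
      unfolding relab_def by auto
    have "\<sigma> (inv_into V \<sigma> w) = w" using w bij by (simp add: bij_betw_inv_into_right)
    then show "e \<in> (\<lambda>(x,y). (\<sigma> x, \<sigma> y)) ` parent_rel par"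
      using e x by (auto simp: parent_rel_def intro!: image_eqI[of _ _ "(inv_into V \<sigma> w, x)"])
  qed
next
  show "(\<lambda>(x,y). (\<sigma> x, \<sigma> y)) ` parent_rel par \<subseteq> parent_rel (relab \<sigma> V W par)"
  proof
    fix e assume "e \<in> (\<lambda>(x,y). (\<sigma> x, \<sigma> y)) ` parent_rel par"
    then obtain v x where e: "e = (\<sigma> v, \<sigma> x)" and h: "par v = Some x"
      unfolding parent_rel_def by auto
    have v: "v \<in> V" using h f unfolding forest_on_def by (metis option.distinct(1))
    then have "\<sigma> v \<in> W" "inv_into V \<sigma> (\<sigma> v) = v" using bij
      by (auto simp: bij_betw_def inv_into_f_f)
    then show "e \<in> parent_rel (relab \<sigma> V W par)"
      using e h by (simp add: parent_rel_def relab_def)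
  qed
qed

lemma relab_FS:
  assumes bij: "bij_betw \<sigma> V W" and mono: "\<forall>x\<in>V. \<forall>y\<in>V. x < y \<longrightarrow> \<sigma> x < \<sigma> y"
    and p: "par \<in> FS S V"
  shows "relab \<sigma> V W par \<in> FS S W"
proof -
  let ?R = "parent_rel par" and ?T = "relab \<sigma> V W par"
  have f: "forest_on V par" using p by (simp add: FS_def)
  have sub: "?R \<subseteq> V \<times> V" by (rule forest_rel_sub[OF f])
  have injV: "inj_on \<sigma> V" using bij by (simp add: bij_betw_def)
  have inj: "inj_on \<sigma> (Domain ?R \<union> Range ?R)"
    by (rule inj_on_subset[OF injV]) (use sub in auto)
  have rT: "parent_rel ?T = (\<lambda>(x,y). (\<sigma> x, \<sigma> y)) ` ?R" by (rule rel_relab[OF f bij])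
  have bk: "\<exists>a b. p = \<sigma> a \<and> q = \<sigma> b \<and> (a,b) \<in> ?R\<^sup>+ \<and> a \<in> V \<and> b \<in> V"
    if "(p,q) \<in> (parent_rel ?T)\<^sup>+" for p q
  proof -
    have "(p,q) \<in> ((\<lambda>(x,y). (\<sigma> x, \<sigma> y)) ` ?R)\<^sup>+" using that rT by simp
    then obtain a b where "p = \<sigma> a" "q = \<sigma> b" "(a,b) \<in> ?R\<^sup>+"
      using trancl_image_inj[OF inj] by blast
    moreover have "?R\<^sup>+ \<subseteq> V \<times> V" by (rule trancl_subset_Sigma[OF sub])
    ultimately show ?thesis by blast
  qed
  have tinv: "inv_into V \<sigma> (\<sigma> a) = a" if "a \<in> V" for a using injV that by (simp add: inv_into_f_f)
  have f1: "\<forall>v. v \<notin> W \<longrightarrow> ?T v = None" by (simp add: relab_def)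
  have f2: "\<forall>v u. ?T v = Some u \<longrightarrow> u \<in> W"
  proof (intro allI impI)
    fix v u assume "?T v = Some u"
    then have "(v,u) \<in> parent_rel ?T" by (simp add: parent_rel_def)
    then obtain x y where "(x,y) \<in> ?R" "u = \<sigma> y" using rT by auto
    then show "u \<in> W" using sub bij by (auto simp: bij_betw_def)
  qed
  have f3: "acyclic (parent_rel ?T)"
    unfolding acyclic_def
  proof (intro allI notI)
    fix x assume "(x,x) \<in> (parent_rel ?T)\<^sup>+"
    then obtain a b where ab: "x = \<sigma> a" "x = \<sigma> b" "(a,b) \<in> ?R\<^sup>+" "a \<in> V" "b \<in> V"
      using bk by blast
    then have "a = b" using injV by (simp add: inj_on_eq_iff)
    then show False using ab f unfolding forest_on_def acyclic_def by blast
  qed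
  have av: "\<not> inst_on W ?T pat ws" if "pat \<in> S" for pat ws
  proof
    assume h: "inst_on W ?T pat ws"
    define vs where "vs = map (inv_into V \<sigma>) ws"
    have wsW: "set ws \<subseteq> W" using h by (simp add: inst_on_def)
    have vsV: "set vs \<subseteq> V" unfolding vs_def using wsW bij
      by (auto simp: bij_betw_def inv_into_into)
    have len: "length vs = length ws" by (simp add: vs_def)
    have wsv: "ws ! i = \<sigma> (vs ! i)" if "i < length ws" for i
      using that wsW bij unfolding vs_def
      by (simp add: bij_betw_inv_into_right subset_iff)
    have vsi: "vs ! i \<in> V" if "i < length ws" for i using subsetD[OF vsV nth_mem[of i vs]] that len by simp
    have ord: "(vs ! i < vs ! j) = (ws ! i < ws ! j)" if "i < length ws" "j < length ws" for i j
    proof -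
      have iff: "x < y \<longleftrightarrow> \<sigma> x < \<sigma> y" if "x \<in> V" "y \<in> V" for x y
      proof
        assume "x < y" then show "\<sigma> x < \<sigma> y" using mono that by blast
      next
        assume a: "\<sigma> x < \<sigma> y"
        show "x < y"
        proof (rule ccontr)
          assume "\<not> x < y"
          then have "y < x \<or> y = x" by auto
          then show False
          proof
            assume "y < x" then have "\<sigma> y < \<sigma> x" using mono that by blast
            then show False using a by simp
          next
            assume "y = x" then show False using a by simp
          qed
        qed
      qed
      show ?thesis using iff[OF vsi[OF that(1)] vsi[OF that(2)]] wsv[OF that(1)] wsv[OF that(2)] by simp
    qed
    have ch: "strict_anc par (vs ! i) (vs ! (i+1))" if "i + 1 < length vs" for i
    proof -
      have "strict_anc ?T (ws ! i) (ws ! (i+1))" using h that len by (simp add: inst_on_def)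
      then have "(ws ! (i+1), ws ! i) \<in> (parent_rel ?T)\<^sup>+" by (simp add: strict_anc_def)
      then obtain a b where ab: "ws ! (i+1) = \<sigma> a" "ws ! i = \<sigma> b" "(a,b) \<in> ?R\<^sup>+" "a \<in> V" "b \<in> V"
        using bk by blast
      have i1: "i + 1 < length ws" "i < length ws" using that len by auto
      have "\<sigma> (vs ! (i+1)) = \<sigma> a" "\<sigma> (vs ! i) = \<sigma> b" using ab wsv[OF i1(1)] wsv[OF i1(2)] by auto
      then have "vs ! (i+1) = a" "vs ! i = b" using ab vsi[OF i1(1)] vsi[OF i1(2)] injV
        by (auto simp: inj_on_eq_iff)
      then show ?thesis using ab by (simp add: strict_anc_def)
    qed
    have "inst_on V par pat vs"
      unfolding inst_on_def using h len vsV ch ord by (simp add: inst_on_def)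
    then show False using p that by (simp add: FS_def avoids_on_def)
  qed
  show ?thesis unfolding FS_def forest_on_def avoids_on_def using f1 f2 f3 av by blast
qed

lemma relab_inj:
  assumes bij: "bij_betw \<sigma> V W"
  shows "inj_on (relab \<sigma> V W) (FS S V)"
proof (rule inj_onI)
  fix p q assume p: "p \<in> FS S V" and q: "q \<in> FS S V" and e: "relab \<sigma> V W p = relab \<sigma> V W q"
  have injV: "inj_on \<sigma> V" using bij by (simp add: bij_betw_def)
  show "p = q"
  proof
    fix v show "p v = q v"
    proof (cases "v \<in> V")
      case False then show ?thesis using FS_None[OF p] FS_None[OF q] by simp
    next
      case True
      then have "\<sigma> v \<in> W" "inv_into V \<sigma> (\<sigma> v) = v" using bij
        by (auto simp: bij_betw_def inv_into_f_f)
      then have m: "map_option \<sigma> (p v) = map_option \<sigma> (q v)"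
        using fun_cong[OF e, of "\<sigma> v"] by (simp add: relab_def)
      show ?thesis
      proof (cases "p v")
        case None then show ?thesis using m by simp
      next
        case (Some a)
        then obtain b where b: "q v = Some b" using m by (cases "q v") auto
        have "a \<in> V" "b \<in> V" using FS_Some[OF p Some] FS_Some[OF q b] .
        moreover have "\<sigma> a = \<sigma> b" using m Some b by simp
        ultimately show ?thesis using Some b injV by (simp add: inj_on_eq_iff)
      qed
    qed
  qed
qed

lemma card_FS_mono_iso:
  assumes bij: "bij_betw \<sigma> V W" and mono: "\<forall>x\<in>V. \<forall>y\<in>V. x < y \<longrightarrow> \<sigma> x < \<sigma> y"
    and fin: "finite W"
  shows "card (FS S V) \<le> card (FS S W)"
proof -
  have "card (FS S V) = card (relab \<sigma> V W ` FS S V)"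
    using relab_inj[OF bij] by (simp add: card_image)
  also have "\<dots> \<le> card (FS S W)"
    by (rule card_mono[OF finite_FS[OF fin]]) (use relab_FS[OF bij mono] in blast)
  finally show ?thesis .
qed

lemma card_FS_iso:
  assumes bij: "bij_betw \<sigma> V W" and mono: "\<forall>x\<in>V. \<forall>y\<in>V. x < y \<longrightarrow> \<sigma> x < \<sigma> y"
    and fin: "finite W"
  shows "card (FS S V) = card (FS S W)"
proof -
  have finV: "finite V" using bij fin by (simp add: bij_betw_finite)
  have bij': "bij_betw (inv_into V \<sigma>) W V" by (rule bij_betw_inv_into[OF bij])
  have mono': "\<forall>x\<in>W. \<forall>y\<in>W. x < y \<longrightarrow> inv_into V \<sigma> x < inv_into V \<sigma> y"
  proof (intro ballI impI)
    fix x y assume xy: "x \<in> W" "y \<in> W" "x < y"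
    have i: "inv_into V \<sigma> x \<in> V" "inv_into V \<sigma> y \<in> V" using bij' xy by (auto simp: bij_betw_def)
    have e: "\<sigma> (inv_into V \<sigma> x) = x" "\<sigma> (inv_into V \<sigma> y) = y"
      using bij xy by (auto simp: bij_betw_inv_into_right)
    show "inv_into V \<sigma> x < inv_into V \<sigma> y"
    proof (rule ccontr)
      assume "\<not> inv_into V \<sigma> x < inv_into V \<sigma> y"
      then have "inv_into V \<sigma> y < inv_into V \<sigma> x \<or> inv_into V \<sigma> y = inv_into V \<sigma> x" by auto
      then show False
      proof
        assume "inv_into V \<sigma> y < inv_into V \<sigma> x"
        then have "\<sigma> (inv_into V \<sigma> y) < \<sigma> (inv_into V \<sigma> x)" using mono i by blast
        then show False using e xy by simp
      next
        assume "inv_into V \<sigma> y = inv_into V \<sigma> x"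
        then have "y = x" using e by metis
        then show False using xy by simp
      qed
    qed
  qed
  show ?thesis using card_FS_mono_iso[OF bij mono fin, of S] card_FS_mono_iso[OF bij' mono' finV, of S] by simp
qed

lemma iso_exists:
  fixes V :: "nat set"
  assumes "finite V"
  shows "\<exists>\<sigma>. bij_betw \<sigma> {1..card V} V \<and> (\<forall>x\<in>{1..card V}. \<forall>y\<in>{1..card V}. x < y \<longrightarrow> \<sigma> x < \<sigma> y)"
proof -
  obtain xs where xs: "sorted_wrt (<) xs" "set xs = V" "length xs = card V"
    using finite_set_strict_sorted[OF assms] by metis
  have d: "distinct xs" using xs(1) by (simp add: strict_sorted_iff)
  have b1: "bij_betw (\<lambda>i. i - 1) {1..card V} {..<card V}"
    by (rule bij_betw_byWitness[where f'="\<lambda>i. i + 1"]) auto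
  have b2: "bij_betw ((!) xs) {..<card V} V" by (rule bij_betw_nth[OF d]) (use xs in auto)
  have "bij_betw ((!) xs \<circ> (\<lambda>i. i - 1)) {1..card V} V" by (rule bij_betw_trans[OF b1 b2])
  moreover have "\<forall>x\<in>{1..card V}. \<forall>y\<in>{1..card V}. x < y \<longrightarrow> ((!) xs \<circ> (\<lambda>i. i - 1)) x < ((!) xs \<circ> (\<lambda>i. i - 1)) y"
  proof (intro ballI impI)
    fix x y assume xy: "x \<in> {1..card V}" "y \<in> {1..card V}" "x < y"
    then have "x - 1 < y - 1" "y - 1 < length xs" using xs(3) by auto
    then show "((!) xs \<circ> (\<lambda>i. i - 1)) x < ((!) xs \<circ> (\<lambda>i. i - 1)) y"
      using sorted_wrt_nth_less[OF xs(1)] by simp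
  qed
  ultimately show ?thesis by blast
qed

lemma card_FS_card:
  fixes V :: "nat set"
  assumes "finite V"
  shows "card (FS S V) = card (FS S {1..card V})"
proof -
  obtain \<sigma> where s: "bij_betw \<sigma> {1..card V} V" "\<forall>x\<in>{1..card V}. \<forall>y\<in>{1..card V}. x < y \<longrightarrow> \<sigma> x < \<sigma> y"
    using iso_exists[OF assms] by blast
  show ?thesis using card_FS_iso[OF s assms] by simp
qed

definition merge :: "nat \<Rightarrow> nat set \<Rightarrow> (nat \<Rightarrow> nat option) \<Rightarrow> (nat \<Rightarrow> nat option) \<Rightarrow> nat \<Rightarrow> nat option" where
  "merge r A F1 F2 = (\<lambda>v. if v \<in> A then (case F1 v of None \<Rightarrow> Some r | Some u \<Rightarrow> Some u) else F2 v)"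

definition extc :: "nat list set \<Rightarrow> nat set \<Rightarrow> nat \<Rightarrow> bool" where
  "extc S U r \<longleftrightarrow> (\<forall>pat\<in>S. \<forall>vs. length vs = length pat \<longrightarrow> vs ! 0 = r \<longrightarrow>
        (\<forall>j. 0 < j \<longrightarrow> j < length vs \<longrightarrow> vs ! j \<in> U - {r}) \<longrightarrow>
        (\<forall>i j. i < length vs \<longrightarrow> j < length vs \<longrightarrow> (vs ! i < vs ! j \<longleftrightarrow> pat ! i < pat ! j)) \<longrightarrow> False)"

locale mctx =
  fixes S :: "nat list set" and U :: "nat set" and r :: nat and A B :: "nat set"
    and F1 F2 :: "nat \<Rightarrow> nat option"
  assumes rU: "r \<in> U" and AB: "A \<inter> B = {}" and ABU: "A \<union> B = U - {r}"
    and F1: "F1 \<in> FS S A" and F2: "F2 \<in> FS S B"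
    and len2: "\<forall>pat\<in>S. length pat \<ge> 2"
    and ext: "extc S U r"
begin

abbreviation "G \<equiv> merge r A F1 F2"

lemma rA: "r \<notin> A" and rB: "r \<notin> B" using ABU by auto

lemma G_r: "G r = None"
  using rA rB FS_None[OF F2] by (simp add: merge_def)

lemma G_B: "v \<notin> A \<Longrightarrow> G v = F2 v" by (simp add: merge_def)

lemma G_rel:
  assumes "(x,y) \<in> (parent_rel G)\<^sup>+"
  shows "(x \<in> B \<and> y \<in> B \<and> (x,y) \<in> (parent_rel F2)\<^sup>+) \<or> (x \<in> A \<and> y = r) \<or>
         (x \<in> A \<and> y \<in> A \<and> (x,y) \<in> (parent_rel F1)\<^sup>+)"
  using assms
proof (induction rule: trancl_induct)
  case (base y)
  then have g: "G x = Some y" by (simp add: parent_rel_def)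
  show ?case
  proof (cases "x \<in> A")
    case True
    show ?thesis
    proof (cases "F1 x")
      case None then show ?thesis using g True by (simp add: merge_def)
    next
      case (Some u)
      then have "y = u" using g True by (simp add: merge_def)
      then show ?thesis using Some True FS_Some[OF F1 Some] by (auto simp: parent_rel_def)
    qed
  next
    case False
    then have "F2 x = Some y" using g by (simp add: merge_def)
    moreover then have "x \<in> B" using FS_None[OF F2] by (metis option.distinct(1))
    ultimately show ?thesis using FS_Some[OF F2] by (auto simp: parent_rel_def)
  qed
next
  case (step y z)
  then have g: "G y = Some z" by (simp add: parent_rel_def)
  from step.IH show ?case
  proof (elim disjE conjE)
    assume h: "x \<in> B" "y \<in> B" "(x, y) \<in> (parent_rel F2)\<^sup>+"
    then have "y \<notin> A" using AB by auto
    then have "F2 y = Some z" using g by (simp add: merge_def)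
    then have "(y,z) \<in> parent_rel F2" "z \<in> B" using FS_Some[OF F2] by (auto simp: parent_rel_def)
    then have "(x,z) \<in> (parent_rel F2)\<^sup>+" "z \<in> B" using h(3) by (auto intro: trancl_into_trancl)
    then show ?thesis using h by blast
  next
    assume "x \<in> A" "y = r"
    then show ?thesis using g G_r by simp
  next
    assume h: "x \<in> A" "y \<in> A" "(x, y) \<in> (parent_rel F1)\<^sup>+"
    show ?thesis
    proof (cases "F1 y")
      case None then show ?thesis using g h by (simp add: merge_def)
    next
      case (Some u)
      then have "z = u" using g h by (simp add: merge_def)
      then have "(y,z) \<in> parent_rel F1" "z \<in> A" using Some FS_Some[OF F1 Some] by (auto simp: parent_rel_def)
      then have "(x,z) \<in> (parent_rel F1)\<^sup>+" "z \<in> A" using h(3) by (auto intro: trancl_into_trancl)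
      then show ?thesis using h by blast
    qed
  qed
qed

lemma G_forest: "forest_on U G"
proof -
  have f1: "\<forall>v. v \<notin> U \<longrightarrow> G v = None"
  proof (intro allI impI)
    fix v assume "v \<notin> U"
    then have "v \<notin> A" "v \<notin> B" using ABU by auto
    then show "G v = None" using FS_None[OF F2] by (simp add: merge_def)
  qed
  have f2: "\<forall>v u. G v = Some u \<longrightarrow> u \<in> U"
  proof (intro allI impI)
    fix v u assume "G v = Some u"
    then have "(v,u) \<in> parent_rel G" by (simp add: parent_rel_def)
    then have "(v,u) \<in> (parent_rel G)\<^sup>+" by (rule r_into_trancl)
    then show "u \<in> U" using G_rel ABU rU by blast
  qed
  have f3: "acyclic (parent_rel G)"
    unfolding acyclic_def
  proof (intro allI notI)
    fix x assume "(x,x) \<in> (parent_rel G)\<^sup>+"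
    then show False using G_rel[of x x] rA F1 F2
      unfolding FS_def forest_on_def acyclic_def by blast
  qed
  show ?thesis unfolding forest_on_def using f1 f2 f3 by blast
qed

lemma G_avoids: "avoids_on U G S"
  unfolding avoids_on_def
proof (intro ballI allI notI)
  fix pat vs assume pS: "pat \<in> S" and inst: "inst_on U G pat vs"
  have len: "length vs = length pat" using inst by (simp add: inst_on_def)
  have len': "length vs \<ge> 2" using len len2 pS by simp
  have ch: "(vs ! (i+1), vs ! i) \<in> (parent_rel G)\<^sup>+" if "i + 1 < length vs" for i
    using inst that by (simp add: inst_on_def strict_anc_def)
  have ord: "\<forall>i j. i < length vs \<longrightarrow> j < length vs \<longrightarrow> (vs ! i < vs ! j \<longleftrightarrow> pat ! i < pat ! j)"
    using inst by (simp add: inst_on_def)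
  have vU: "vs ! i \<in> U" if "i < length vs" for i
  proof -
    have "set vs \<subseteq> U" using inst by (simp add: inst_on_def)
    then show ?thesis using that by (simp add: subset_iff)
  qed
  have "0 < length vs" using len' by linarith
  then have v0: "vs ! 0 \<in> U" by (rule vU)
  consider "vs ! 0 = r" | "vs ! 0 \<in> A" | "vs ! 0 \<in> B" using v0 ABU by blast
  then show False
  proof cases
    case 1
    have J: "\<forall>j. 0 < j \<longrightarrow> j < length vs \<longrightarrow> vs ! j \<in> U - {r}"
    proof (intro allI impI)
      fix j assume j0: "0 < j" and jl: "j < length vs"
      obtain i where i: "j = Suc i" using gr0_implies_Suc[OF j0] by blast
      have i1: "i + 1 < length vs" using jl i by simp
      have "(vs ! (i+1), vs ! i) \<in> (parent_rel G)\<^sup>+" by (rule ch[OF i1])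
      then have "(vs ! j, vs ! i) \<in> (parent_rel G)\<^sup>+" using i by simp
      then obtain z where "(vs ! j, z) \<in> parent_rel G" by (blast dest: tranclD)
      then have "G (vs ! j) \<noteq> None" by (simp add: parent_rel_def)
      then have "vs ! j \<noteq> r" using G_r by auto
      then show "vs ! j \<in> U - {r}" using vU[OF jl] by simp
    qed
    note E = spec[OF bspec[OF ext[unfolded extc_def] pS], of vs]
    show False using mp[OF mp[OF mp[OF mp[OF E len(1)] 1] J] ord] .
  next
    case 2
    have allA: "vs ! i \<in> A" if "i < length vs" for i
      using that
    proof (induction i)
      case 0 then show ?case using 2 by simp
    next
      case (Suc i)
      have i1: "i + 1 < length vs" using Suc.prems by simp
      have yA: "vs ! i \<in> A" using Suc.IH Suc.prems by simp
      have yB: "vs ! i \<notin> B" "vs ! i \<noteq> r" using yA AB rA by auto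
      have "vs ! (i+1) \<in> A" using G_rel[OF ch[OF i1]] yB by blast
      then show ?case by simp
    qed
    have chA: "strict_anc F1 (vs ! i) (vs ! (i + 1))" if i: "i + 1 < length vs" for i
    proof -
      have yA: "vs ! i \<in> A" using allA i by simp
      have yB: "vs ! i \<notin> B" "vs ! i \<noteq> r" using yA AB rA by auto
      have "(vs ! (i+1), vs ! i) \<in> (parent_rel F1)\<^sup>+" using G_rel[OF ch[OF i]] yB by blast
      then show ?thesis by (simp add: strict_anc_def)
    qed
    have sA: "set vs \<subseteq> A" using allA by (auto simp: in_set_conv_nth)
    have "inst_on A F1 pat vs"
      unfolding inst_on_def
    proof (intro conjI)
      show "length vs = length pat" by (rule len)
      show "set vs \<subseteq> A" by (rule sA)
      show "\<forall>i. i + 1 < length vs \<longrightarrow> strict_anc F1 (vs ! i) (vs ! (i + 1))" using chA by blast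
      show "\<forall>i j. i < length vs \<longrightarrow> j < length vs \<longrightarrow> (vs ! i < vs ! j) = (pat ! i < pat ! j)" by (rule ord)
    qed
    then show False using F1 pS by (simp add: FS_def avoids_on_def)
  next
    case 3
    have allB: "vs ! i \<in> B" if "i < length vs" for i
      using that
    proof (induction i)
      case 0 then show ?case using 3 by simp
    next
      case (Suc i)
      have i1: "i + 1 < length vs" using Suc.prems by simp
      have yB: "vs ! i \<in> B" using Suc.IH Suc.prems by simp
      have yA: "vs ! i \<notin> A" "vs ! i \<noteq> r" using yB AB rB by auto
      have "vs ! (i+1) \<in> B" using G_rel[OF ch[OF i1]] yA by blast
      then show ?case by simp
    qed
    have chB: "strict_anc F2 (vs ! i) (vs ! (i + 1))" if i: "i + 1 < length vs" for i
    proof -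
      have yB: "vs ! i \<in> B" using allB i by simp
      have yA: "vs ! i \<notin> A" "vs ! i \<noteq> r" using yB AB rB by auto
      have "(vs ! (i+1), vs ! i) \<in> (parent_rel F2)\<^sup>+" using G_rel[OF ch[OF i]] yA by blast
      then show ?thesis by (simp add: strict_anc_def)
    qed
    have sB: "set vs \<subseteq> B" using allB by (auto simp: in_set_conv_nth)
    have "inst_on B F2 pat vs"
      unfolding inst_on_def
    proof (intro conjI)
      show "length vs = length pat" by (rule len)
      show "set vs \<subseteq> B" by (rule sB)
      show "\<forall>i. i + 1 < length vs \<longrightarrow> strict_anc F2 (vs ! i) (vs ! (i + 1))" using chB by blast
      show "\<forall>i j. i < length vs \<longrightarrow> j < length vs \<longrightarrow> (vs ! i < vs ! j) = (pat ! i < pat ! j)" by (rule ord)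
    qed
    then show False using F2 pS by (simp add: FS_def avoids_on_def)
  qed
qed

lemma G_FS: "G \<in> FS S U"
  using G_forest G_avoids by (simp add: FS_def)

lemma G_roots: "{v \<in> U. G v = None} = insert r {v \<in> B. F2 v = None}"
proof -
  have e: "G v = None \<longleftrightarrow> v \<notin> A \<and> F2 v = None" for v
    by (cases "F1 v") (auto simp: merge_def)
  have r2: "F2 r = None" using FS_None[OF F2 rB] .
  show ?thesis
  proof (intro set_eqI iffI)
    fix v assume "v \<in> {v \<in> U. G v = None}"
    then have "v \<in> U" "v \<notin> A" "F2 v = None" using e by auto
    then show "v \<in> insert r {v \<in> B. F2 v = None}" using ABU by blast
  next
    fix v assume v: "v \<in> insert r {v \<in> B. F2 v = None}"
    then have "v \<in> U" using ABU rU by blast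
    moreover have "v \<notin> A" "F2 v = None" using v rA r2 AB by auto
    ultimately show "v \<in> {v \<in> U. G v = None}" using e by blast
  qed
qed

lemma G_recover:
  assumes finA: "finite A"
  shows "{v. (v, r) \<in> (parent_rel G)\<^sup>+} = A"
proof
  show "{v. (v, r) \<in> (parent_rel G)\<^sup>+} \<subseteq> A" using G_rel rB by blast
next
  have fA: "forest_on A F1" using F1 by (simp add: FS_def)
  have sub: "parent_rel F1 \<subseteq> A \<times> A" by (rule forest_rel_sub[OF fA])
  have wf: "wf ((parent_rel F1)\<inverse>)"
    by (rule finite_acyclic_wf_converse)
       (use finite_subset[OF sub] finA fA in \<open>auto simp: forest_on_def\<close>)
  have "v \<in> A \<longrightarrow> (v, r) \<in> (parent_rel G)\<^sup>+" for v
  proof (induction v rule: wf_induct[OF wf])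
    case (1 v)
    show ?case
    proof
      assume vA: "v \<in> A"
      show "(v, r) \<in> (parent_rel G)\<^sup>+"
      proof (cases "F1 v")
        case None
        then have "G v = Some r" using vA by (simp add: merge_def)
        then show ?thesis by (simp add: parent_rel_def r_into_trancl')
      next
        case (Some u)
        then have uA: "u \<in> A" using FS_Some[OF F1] by blast
        have "(u, v) \<in> (parent_rel F1)\<inverse>" using Some by (simp add: parent_rel_def)
        then have "(u, r) \<in> (parent_rel G)\<^sup>+" using 1 uA by blast
        moreover have "G v = Some u" using vA Some by (simp add: merge_def)
        then have "(v, u) \<in> parent_rel G" by (simp add: parent_rel_def)
        ultimately show ?thesis by (meson trancl_into_trancl2)
      qed
    qed
  qed
  then show "A \<subseteq> {v. (v, r) \<in> (parent_rel G)\<^sup>+}" by blast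
qed

end

lemma merge_inj:
  assumes "A \<inter> B = {}" "r \<notin> A"
  shows "inj_on (\<lambda>(F1, F2). merge r A F1 F2) (FS S A \<times> FS S B)"
proof (rule inj_onI)
  fix x y assume x: "x \<in> FS S A \<times> FS S B" and y: "y \<in> FS S A \<times> FS S B"
    and e: "(\<lambda>(F1, F2). merge r A F1 F2) x = (\<lambda>(F1, F2). merge r A F1 F2) y"
  obtain a1 a2 where xa: "x = (a1, a2)" by (cases x)
  obtain b1 b2 where yb: "y = (b1, b2)" by (cases y)
  have a: "a1 \<in> FS S A" "a2 \<in> FS S B" "b1 \<in> FS S A" "b2 \<in> FS S B" using x y xa yb by auto
  have m: "merge r A a1 a2 v = merge r A b1 b2 v" for v using e xa yb by simp
  have "a1 v = b1 v" for v
  proof (cases "v \<in> A")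
    case False then show ?thesis using FS_None[OF a(1) False] FS_None[OF a(3) False] by simp
  next
    case True
    have nr: "a1 v \<noteq> Some r" "b1 v \<noteq> Some r"
      using FS_Some[OF a(1), of v r] FS_Some[OF a(3), of v r] assms(2) by auto
    show ?thesis using m[of v] True nr
      by (cases "a1 v"; cases "b1 v") (auto simp: merge_def)
  qed
  moreover have "a2 v = b2 v" for v
  proof (cases "v \<in> A")
    case True then have "v \<notin> B" using assms by auto
    then show ?thesis using FS_None[OF a(2)] FS_None[OF a(4)] by simp
  next
    case False then show ?thesis using m[of v] by (simp add: merge_def)
  qed
  ultimately show "x = y" using xa yb by auto
qed

lemma mctxI:
  assumes "r \<in> U" "A \<subseteq> U - {r}" "F1 \<in> FS S A" "F2 \<in> FS S (U - {r} - A)"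
    "\<forall>pat\<in>S. length pat \<ge> 2" "extc S U r"
  shows "mctx S U r A (U - {r} - A) F1 F2"
  unfolding mctx_def using assms by auto

lemma merge_count:
  fixes U :: "nat set"
  assumes finU: "finite U" and rU: "r \<in> U" and len2: "\<forall>pat\<in>S. length pat \<ge> 2"
    and ex: "extc S U r"
  shows "(card U - 1 choose p) * card (FS S {1..p}) * card (FS S {1..card U - 1 - p}) \<le> card (FS S U)"
proof -
  define U' where "U' = U - {r}"
  have finU': "finite U'" using finU by (simp add: U'_def)
  have cU': "card U' = card U - 1" using finU rU by (simp add: U'_def)
  define X where "X = {A. A \<subseteq> U' \<and> card A = p}"
  define img where "img A = (\<lambda>(F1, F2). merge r A F1 F2) ` (FS S A \<times> FS S (U' - A))" for A
  have "X \<subseteq> Pow U'" unfolding X_def by auto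
  then have finX: "finite X" using finU' by (rule finite_subset[OF _ finite_Pow_iff[THEN iffD2]])
  have AX: "A \<subseteq> U'" "card A = p" "finite A" if "A \<in> X" for A
    using that finU' unfolding X_def by (auto intro: finite_subset)
  have sub: "img A \<subseteq> FS S U" if "A \<in> X" for A
  proof
    fix G assume "G \<in> img A"
    then obtain F1 F2 where F: "F1 \<in> FS S A" "F2 \<in> FS S (U' - A)" "G = merge r A F1 F2"
      unfolding img_def by auto
    interpret mctx S U r A "U' - A" F1 F2
      using mctxI[OF rU _ F(1) _ len2 ex] AX[OF that] F(2) unfolding U'_def by blast
    show "G \<in> FS S U" using G_FS F(3) by simp
  qed
  have cimg: "card (img A) = card (FS S {1..p}) * card (FS S {1..card U - 1 - p})" if "A \<in> X" for A
  proof -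
    have rA: "r \<notin> A" using AX[OF that] by (auto simp: U'_def)
    have "card (img A) = card (FS S A \<times> FS S (U' - A))"
      unfolding img_def by (rule card_image[OF merge_inj]) (use rA in auto)
    also have "\<dots> = card (FS S A) * card (FS S (U' - A))" by (rule card_cartesian_product)
    also have "card (FS S A) = card (FS S {1..p})"
      using card_FS_card[OF AX(3)[OF that]] AX(2)[OF that] by simp
    also have "card (FS S (U' - A)) = card (FS S {1..card U - 1 - p})"
    proof -
      have "card (U' - A) = card U - 1 - p" using AX[OF that] cU' finU' by (simp add: card_Diff_subset)
      then show ?thesis using card_FS_card[of "U' - A" S] finU' by simp
    qed
    finally show ?thesis .
  qed
  have disj: "img A \<inter> img A' = {}" if "A \<in> X" "A' \<in> X" "A \<noteq> A'" for A A'
  proof (rule ccontr)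
    assume "img A \<inter> img A' \<noteq> {}"
    then obtain G where G: "G \<in> img A" "G \<in> img A'" by blast
    from G(1) obtain F1 F2 where F: "F1 \<in> FS S A" "F2 \<in> FS S (U' - A)" "G = merge r A F1 F2"
      unfolding img_def by auto
    from G(2) obtain F1' F2' where F': "F1' \<in> FS S A'" "F2' \<in> FS S (U' - A')" "G = merge r A' F1' F2'"
      unfolding img_def by auto
    have m1: "mctx S U r A (U' - A) F1 F2"
      using mctxI[OF rU _ F(1) _ len2 ex] AX[OF that(1)] F(2) unfolding U'_def by blast
    have m2: "mctx S U r A' (U' - A') F1' F2'"
      using mctxI[OF rU _ F'(1) _ len2 ex] AX[OF that(2)] F'(2) unfolding U'_def by blast
    have "{v. (v, r) \<in> (parent_rel G)\<^sup>+} = A" using mctx.G_recover[OF m1 AX(3)[OF that(1)]] F(3) by simp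
    moreover have "{v. (v, r) \<in> (parent_rel G)\<^sup>+} = A'" using mctx.G_recover[OF m2 AX(3)[OF that(2)]] F'(3) by simp
    ultimately show False using that(3) by simp
  qed
  have finimg: "finite (img A)" if "A \<in> X" for A
    using sub[OF that] finite_FS[OF finU] by (rule finite_subset)
  have "card (\<Union>A\<in>X. img A) = (\<Sum>A\<in>X. card (img A))"
    by (rule card_UN_disjoint[OF finX]) (use finimg disj in blast)+
  also have "\<dots> = (\<Sum>A\<in>X. card (FS S {1..p}) * card (FS S {1..card U - 1 - p}))"
    using cimg by simp
  also have "\<dots> = card X * (card (FS S {1..p}) * card (FS S {1..card U - 1 - p}))" by simp
  also have "card X = (card U - 1 choose p)" unfolding X_def using n_subsets[OF finU'] cU' by simp
  finally have e: "card (\<Union>A\<in>X. img A) = (card U - 1 choose p) * card (FS S {1..p}) * card (FS S {1..card U - 1 - p})"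
    by simp
  have "card (\<Union>A\<in>X. img A) \<le> card (FS S U)"
    by (rule card_mono[OF finite_FS[OF finU]]) (use sub in blast)
  then show ?thesis using e by simp
qed

lemma tree_count:
  fixes U :: "nat set"
  assumes finU: "finite U" and rU: "r \<in> U" and len2: "\<forall>pat\<in>S. length pat \<ge> 2"
    and ex: "extc S U r"
  shows "card (FS S {1..card U - 1}) \<le> card {par. par \<in> FS S U \<and> card {v \<in> U. par v = None} = 1}"
proof -
  define A where "A = U - {r}"
  have finA: "finite A" using finU by (simp add: A_def)
  have e0: "(\<lambda>_. None) \<in> FS S {}" by (rule empty_in_FS[OF len2])
  have UA: "U - {r} - A = {}" by (simp add: A_def)
  have m: "mctx S U r A {} F1 (\<lambda>_. None)" if "F1 \<in> FS S A" for F1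
    using mctxI[OF rU _ that _ len2 ex, of "\<lambda>_. None"] e0 unfolding A_def by simp
  have inj: "inj_on (\<lambda>F1. merge r A F1 (\<lambda>_. None)) (FS S A)"
  proof (rule inj_onI)
    fix x y assume x: "x \<in> FS S A" and y: "y \<in> FS S A" and e: "merge r A x (\<lambda>_. None) = merge r A y (\<lambda>_. None)"
    have "(x, (\<lambda>_. None)) = (y, (\<lambda>_. None))"
      using inj_onD[OF merge_inj[of A "{}" r S]] x y e e0 by (auto simp: A_def)
    then show "x = y" by simp
  qed
  have sub: "(\<lambda>F1. merge r A F1 (\<lambda>_. None)) ` FS S A \<subseteq> {par. par \<in> FS S U \<and> card {v \<in> U. par v = None} = 1}"
  proof
    fix G assume "G \<in> (\<lambda>F1. merge r A F1 (\<lambda>_. None)) ` FS S A"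
    then obtain F1 where F1: "F1 \<in> FS S A" "G = merge r A F1 (\<lambda>_. None)" by blast
    have "G \<in> FS S U" using mctx.G_FS[OF m[OF F1(1)]] F1(2) by simp
    moreover have "{v \<in> U. G v = None} = {r}" using mctx.G_roots[OF m[OF F1(1)]] F1(2) by simp
    ultimately show "G \<in> {par. par \<in> FS S U \<and> card {v \<in> U. par v = None} = 1}" by simp
  qed
  have fin: "finite {par. par \<in> FS S U \<and> card {v \<in> U. par v = None} = 1}"
    using finite_FS[OF finU] by simp
  have "card (FS S {1..card U - 1}) = card (FS S A)"
    using card_FS_card[OF finA, of S] finU rU by (simp add: A_def)
  also have "\<dots> = card ((\<lambda>F1. merge r A F1 (\<lambda>_. None)) ` FS S A)" using inj by (simp add: card_image)
  also have "\<dots> \<le> card {par. par \<in> FS S U \<and> card {v \<in> U. par v = None} = 1}"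
    by (rule card_mono[OF fin sub])
  finally show ?thesis .
qed

lemma pat_max:
  assumes p: "is_pattern pat" and lt: "\<forall>j. 0 < j \<longrightarrow> j < length pat \<longrightarrow> pat ! j < pat ! 0"
  shows "pat ! 0 = length pat"
proof -
  have l1: "length pat \<ge> 1" and st: "set pat = {1..length pat}" using p by (auto simp: is_pattern_def)
  have "length pat \<in> set pat" using l1 st by simp
  then obtain i where i: "i < length pat" "pat ! i = length pat" by (auto simp: in_set_conv_nth)
  have "0 < length pat" using l1 by linarith
  then have "pat ! 0 \<in> set pat" by (rule nth_mem)
  then have le: "pat ! 0 \<le> length pat" using st by simp
  show ?thesis
  proof (cases "i = 0")
    case True then show ?thesis using i by simp
  next
    case False
    then have "0 < i" by simp
    then have "pat ! i < pat ! 0" using lt i(1) by blast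
    then show ?thesis using le i by simp
  qed
qed

lemma pat_min:
  assumes p: "is_pattern pat" and lt: "\<forall>j. 0 < j \<longrightarrow> j < length pat \<longrightarrow> pat ! 0 < pat ! j"
  shows "pat ! 0 = 1"
proof -
  have l1: "length pat \<ge> 1" and st: "set pat = {1..length pat}" using p by (auto simp: is_pattern_def)
  have "1 \<in> set pat" using l1 st by simp
  then obtain i where i: "i < length pat" "pat ! i = 1" by (auto simp: in_set_conv_nth)
  have "0 < length pat" using l1 by linarith
  then have "pat ! 0 \<in> set pat" by (rule nth_mem)
  then have le: "1 \<le> pat ! 0" using st by simp
  show ?thesis
  proof (cases "i = 0")
    case True then show ?thesis using i by simp
  next
    case False
    then have "0 < i" by simp
    then have "pat ! 0 < pat ! i" using lt i(1) by blast
    then show ?thesis using le i by simp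
  qed
qed

lemma extc_max:
  assumes pat: "\<forall>pat\<in>S. is_pattern pat" and h: "\<forall>pat\<in>S. hd pat \<noteq> length pat"
  shows "extc S {1..N} N"
  unfolding extc_def
proof (intro ballI allI impI)
  fix pat vs assume pS: "pat \<in> S" and l: "length vs = length pat" and v0: "vs ! 0 = N"
    and J: "\<forall>j. 0 < j \<longrightarrow> j < length vs \<longrightarrow> vs ! j \<in> {1..N} - {N}"
    and o: "\<forall>i j. i < length vs \<longrightarrow> j < length vs \<longrightarrow> (vs ! i < vs ! j) = (pat ! i < pat ! j)"
  have ip: "is_pattern pat" using pat pS by blast
  have ne: "pat \<noteq> []" using ip by (auto simp: is_pattern_def)
  have "\<forall>j. 0 < j \<longrightarrow> j < length pat \<longrightarrow> pat ! j < pat ! 0"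
  proof (intro allI impI)
    fix j assume j: "0 < j" "j < length pat"
    have "vs ! j \<in> {1..N} - {N}" using J[rule_format, of j] j l by simp
    then have "vs ! j < vs ! 0" using v0 by auto
    moreover have j0: "0 < length vs" "j < length vs" using j l by linarith+
    then have "(vs ! j < vs ! 0) = (pat ! j < pat ! 0)" using o[rule_format, OF j0(2) j0(1)] by simp
    ultimately show "pat ! j < pat ! 0" by blast
  qed
  then have "pat ! 0 = length pat" by (rule pat_max[OF ip])
  moreover have "hd pat \<noteq> length pat" using h pS by blast
  ultimately show False using hd_conv_nth[OF ne] by simp
qed

lemma extc_min:
  assumes pat: "\<forall>pat\<in>S. is_pattern pat" and h: "\<forall>pat\<in>S. hd pat \<noteq> 1"
  shows "extc S {1..N} 1"
  unfolding extc_def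
proof (intro ballI allI impI)
  fix pat vs assume pS: "pat \<in> S" and l: "length vs = length pat" and v0: "vs ! 0 = 1"
    and J: "\<forall>j. 0 < j \<longrightarrow> j < length vs \<longrightarrow> vs ! j \<in> {1..N} - {1}"
    and o: "\<forall>i j. i < length vs \<longrightarrow> j < length vs \<longrightarrow> (vs ! i < vs ! j) = (pat ! i < pat ! j)"
  have ip: "is_pattern pat" using pat pS by blast
  have ne: "pat \<noteq> []" using ip by (auto simp: is_pattern_def)
  have "\<forall>j. 0 < j \<longrightarrow> j < length pat \<longrightarrow> pat ! 0 < pat ! j"
  proof (intro allI impI)
    fix j assume j: "0 < j" "j < length pat"
    have "vs ! j \<in> {1..N} - {1}" using J[rule_format, of j] j l by simp
    then have "vs ! 0 < vs ! j" using v0 by auto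
    moreover have j0: "0 < length vs" "j < length vs" using j l by linarith+
    then have "(vs ! 0 < vs ! j) = (pat ! 0 < pat ! j)" using o[rule_format, OF j0(1) j0(2)] by simp
    ultimately show "pat ! 0 < pat ! j" by blast
  qed
  then have "pat ! 0 = 1" by (rule pat_min[OF ip])
  moreover have "hd pat \<noteq> 1" using h pS by blast
  ultimately show False using hd_conv_nth[OF ne] by simp
qed

lemma comb_facts:
  assumes pats: "\<forall>pat\<in>S. is_pattern pat"
    and cond: "(\<forall>pat\<in>S. hd pat \<noteq> 1) \<or> (\<forall>pat\<in>S. hd pat \<noteq> length pat)"
  shows "\<forall>n. 1 \<le> f_count S n"
    "\<forall>n. f_count S n \<le> (n+1)^n"
    "\<forall>p q. (p+q choose p) * f_count S p * f_count S q \<le> f_count S (p+q+1)"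
    "\<forall>n. t_count S n \<le> f_count S n"
    "\<forall>n. f_count S n \<le> t_count S (n+1)"
proof -
  have len2: "\<forall>pat\<in>S. length pat \<ge> 2"
  proof
    fix pat assume pS: "pat \<in> S"
    have ip: "is_pattern pat" using pats pS by blast
    show "length pat \<ge> 2"
    proof (rule ccontr)
      assume "\<not> length pat \<ge> 2"
      then have l1: "length pat = 1" using ip by (simp add: is_pattern_def)
      then have "set pat = {1}" using ip by (simp add: is_pattern_def)
      then have "hd pat = 1" using l1 by (cases pat) auto
      then show False using cond pS l1 by auto
    qed
  qed
  define r where "r N = (if (\<forall>pat\<in>S. hd pat \<noteq> 1) then 1 else N)" for N :: nat
  have ex: "extc S {1..N} (r N)" for N
  proof (cases "\<forall>pat\<in>S. hd pat \<noteq> 1")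
    case True then show ?thesis using extc_min[OF pats True] by (simp add: r_def)
  next
    case False then have "\<forall>pat\<in>S. hd pat \<noteq> length pat" using cond by blast
    then have "extc S {1..N} N" using extc_max[OF pats] by blast
    moreover have "r N = N" unfolding r_def by (rule if_not_P[OF False])
    ultimately show ?thesis by simp
  qed
  have rin: "r N \<in> {1..N}" if "N \<ge> 1" for N using that by (simp add: r_def)
  show "\<forall>n. 1 \<le> f_count S n"
  proof
    fix n
    have "FS S {1..n} \<noteq> {}" using empty_in_FS[OF len2] by blast
    then show "1 \<le> f_count S n" using finite_FS[of "{1..n}" S]
      by (simp add: f_count_FS Suc_le_eq card_gt_0_iff)
  qed
  show "\<forall>n. f_count S n \<le> (n+1)^n"
    using card_forests_le[of "{1..n}" S for n] by (simp add: f_count_FS)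
  show "\<forall>p q. (p+q choose p) * f_count S p * f_count S q \<le> f_count S (p+q+1)"
  proof (intro allI)
    fix p q
    have "r (p+q+1) \<in> {1..p+q+1}" by (rule rin) simp
    from merge_count[OF _ this len2 ex, of p] show "(p+q choose p) * f_count S p * f_count S q \<le> f_count S (p+q+1)"
      by (simp add: f_count_FS)
  qed
  show "\<forall>n. t_count S n \<le> f_count S n"
  proof
    fix n
    show "t_count S n \<le> f_count S n" unfolding t_count_eq f_count_FS
      by (rule card_mono[OF finite_FS]) auto
  qed
  show "\<forall>n. f_count S n \<le> t_count S (n+1)"
  proof
    fix n
    have "r (n+1) \<in> {1..n+1}" by (rule rin) simp
    from tree_count[OF _ this len2 ex] show "f_count S n \<le> t_count S (n+1)"
      by (simp add: f_count_FS t_count_eq)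
  qed
qed

lemma log_k_bound:
  fixes n :: nat
  defines "k \<equiv> nat \<lceil>log 2 (real n + 1)\<rceil>"
  shows "n < 2 ^ k" and "real k \<le> log 2 (real n + 1) + 1"
proof -
  have l0: "log 2 (real n + 1) \<ge> 0" by simp
  have kk: "real k = of_int \<lceil>log 2 (real n + 1)\<rceil>" unfolding k_def using l0 by simp
  have "log 2 (real n + 1) \<le> real k" unfolding kk by simp
  then have "2 powr log 2 (real n + 1) \<le> 2 powr real k" by (rule powr_mono) simp
  then have "real n + 1 \<le> 2 powr real k" by simp
  then have "real n + 1 \<le> 2 ^ k" by (simp add: powr_realpow)
  then have "real (n + 1) \<le> real ((2::nat) ^ k)" by simp
  then have "n + 1 \<le> 2 ^ k" by (simp only: of_nat_le_iff)
  then show "n < 2 ^ k" by simp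
  show "real k \<le> log 2 (real n + 1) + 1" unfolding kk by simp
qed

lemma growth:
  fixes h :: "nat \<Rightarrow> real" and B :: "nat \<Rightarrow> nat" and \<mu> :: real and m :: nat
  assumes sup: "\<And>p q. h p + h q - ln (real (p + q + 1)) \<le> h (p + q + 1)"
    and low: "\<And>n. - (real n * real n) \<le> h n"
    and D: "\<And>j. h (B j) \<ge> (real (B j) + 1) * \<mu>"
    and Bex: "\<And>n. m \<le> n \<Longrightarrow> \<exists>j. B j \<le> n \<and> n < B (Suc j)"
    and BS: "\<And>j. B (Suc j) = B j + B j + 1"
    and nk: "n < 2 ^ k"
  shows "h n \<ge> \<mu> * real n - real k * (\<bar>\<mu>\<bar> + ln (real n + 1)) - (real m * real m + \<bar>\<mu>\<bar> * (real m + 1))"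
  using nk
proof (induction n arbitrary: k rule: less_induct)
  case (less n)
  define K where "K = real m * real m + \<bar>\<mu>\<bar> * (real m + 1)"
  have lnn: "ln (real n + 1) \<ge> 0" by simp
  have Kpos: "K \<ge> \<bar>\<mu>\<bar>"
  proof -
    have "\<bar>\<mu>\<bar> * 1 \<le> \<bar>\<mu>\<bar> * (real m + 1)" by (intro mult_left_mono) auto
    moreover have "real m * real m \<ge> 0" by simp
    ultimately show ?thesis unfolding K_def by linarith
  qed
  have "h n \<ge> \<mu> * real n - real k * (\<bar>\<mu>\<bar> + ln (real n + 1)) - K"
  proof (cases "n < m")
    case True
    have "\<mu> * real n \<le> \<bar>\<mu>\<bar> * real n" by (intro mult_right_mono) auto
    also have "\<dots> \<le> \<bar>\<mu>\<bar> * (real m + 1)" using True by (intro mult_left_mono) auto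
    finally have "\<mu> * real n \<le> \<bar>\<mu>\<bar> * (real m + 1)" .
    moreover have "real k * (\<bar>\<mu>\<bar> + ln (real n + 1)) \<ge> 0" using lnn by simp
    moreover have "- (real m * real m) \<le> h n"
    proof -
      have "real n * real n \<le> real m * real m" using True by (simp add: mult_mono)
      then show ?thesis using low[of n] by linarith
    qed
    ultimately show ?thesis unfolding K_def by linarith
  next
    case False
    then obtain j where j: "B j \<le> n" "n < B (Suc j)" using Bex[of n] by auto
    show ?thesis
    proof (cases "n = B j")
      case True
      have "h n \<ge> (real n + 1) * \<mu>" using D[of j] True by simp
      moreover have "real k * (\<bar>\<mu>\<bar> + ln (real n + 1)) \<ge> 0" using lnn by simp
      moreover have "(real n + 1) * \<mu> = \<mu> * real n + \<mu>" by (simp add: algebra_simps)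
      moreover have "\<mu> \<ge> - \<bar>\<mu>\<bar>" by simp
      ultimately show ?thesis using Kpos by linarith
    next
      case False
      define s where "s = n - B j - 1"
      have ns: "n = B j + s + 1" using j(1) False unfolding s_def by simp
      have sB: "s < B j" using j(2) ns BS[of j] by simp
      have k0: "k \<noteq> 0" using less.prems ns by (cases k) auto
      then obtain k' where k': "k = Suc k'" by (cases k) auto
      have "s < 2 ^ k'" using less.prems ns sB k' by simp
      moreover have "s < n" using ns by simp
      ultimately have IH: "h s \<ge> \<mu> * real s - real k' * (\<bar>\<mu>\<bar> + ln (real s + 1)) - K"
        using less.IH unfolding K_def by blast
      have hB: "h (B j) \<ge> (real (B j) + 1) * \<mu>" using D[of j] by simp
      have sp: "h (B j) + h s - ln (real n) \<le> h n" using sup[of "B j" s] ns by simp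
      have l1: "ln (real s + 1) \<le> ln (real n + 1)" using ns by simp
      have l2: "ln (real n) \<le> ln (real n + 1)" using ns by simp
      have l3: "real k' * ln (real s + 1) \<le> real k' * ln (real n + 1)"
        using l1 by (simp add: mult_left_mono)
      have rn: "real n = real (B j) + real s + 1" using ns by simp
      have e1: "\<mu> * real n = \<mu> * real (B j) + \<mu> * real s + \<mu>" using rn by (simp add: algebra_simps)
      have e2: "(real (B j) + 1) * \<mu> = \<mu> * real (B j) + \<mu>" by (simp add: algebra_simps)
      have e3: "real k' * (\<bar>\<mu>\<bar> + ln (real s + 1)) = real k' * \<bar>\<mu>\<bar> + real k' * ln (real s + 1)"
        by (simp add: algebra_simps)
      have e4: "real k * (\<bar>\<mu>\<bar> + ln (real n + 1)) = real k' * \<bar>\<mu>\<bar> + real k' * ln (real n + 1) + \<bar>\<mu>\<bar> + ln (real n + 1)"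
        using k' by (simp add: algebra_simps)
      have a0: "\<bar>\<mu>\<bar> \<ge> 0" by simp
      show ?thesis using IH hB sp l2 l3 e1 e2 e3 e4 a0 by linarith
    qed
  qed
  then show ?case unfolding K_def .
qed

lemma core:
  fixes h :: "nat \<Rightarrow> real"
  assumes sup: "\<And>p q. h p + h q - ln (real (p + q + 1)) \<le> h (p + q + 1)"
    and up: "\<And>n. h n \<le> real n + 1"
    and low: "\<And>n. - (real n * real n) \<le> h n"
  shows "\<exists>L. (\<lambda>n. h n / real n) \<longlonglongrightarrow> L"
proof -
  define c where "c m = (h m - ln (real m + 1) - 2) / (real m + 1)" for m
  define B where "B m j = 2 ^ j * (m + 1) - 1" for m j :: nat
  have B0: "B m 0 = m" for m by (simp add: B_def)
  have Bpos: "1 \<le> 2 ^ j * (m + 1)" for m j :: nat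
  proof -
    have "0 < (2::nat) ^ j * (m + 1)" by simp
    then show ?thesis by linarith
  qed
  have BS: "B m (Suc j) = B m j + B m j + 1" for m j
    using Bpos[of j m] by (simp add: B_def)
  have Breal: "real (B m j) + 1 = 2 ^ j * (real m + 1)" for m j
    using Bpos[of j m] by (simp add: B_def of_nat_diff algebra_simps)
  have dbl: "h (B m j) \<ge> 2 ^ j * (h m - ln (real m + 1) - 2) + ln (real m + 1) + real j + 2" for m j
  proof (induction j)
    case 0 then show ?case by (simp add: B0)
  next
    case (Suc j)
    have s: "h (B m j) + h (B m j) - ln (real (B m j + B m j + 1)) \<le> h (B m (Suc j))"
      using sup[of "B m j" "B m j"] BS by simp
    have "real (B m j + B m j + 1) \<le> 2 ^ Suc j * (real m + 1)"
      using Breal[of m j] by simp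
    then have "ln (real (B m j + B m j + 1)) \<le> ln (2 ^ Suc j * (real m + 1))" by simp
    also have "\<dots> = ln (2 ^ Suc j) + ln (real m + 1)"
      by (rule ln_mult_pos) auto
    also have "\<dots> \<le> real (Suc j) + ln (real m + 1)"
    proof -
      have "ln (2 ^ Suc j) = real (Suc j) * ln (2::real)" by (rule ln_realpow)
      also have "\<dots> \<le> real (Suc j) * 1" using ln_2_less_1 by (intro mult_left_mono) auto
      finally show ?thesis by simp
    qed
    finally have "ln (real (B m j + B m j + 1)) \<le> real (Suc j) + ln (real m + 1)" .
    then show ?case using s Suc.IH by (simp add: algebra_simps)
  qed
  have D: "h (B m j) \<ge> (real (B m j) + 1) * c m" for m j
  proof -
    have "(real (B m j) + 1) * c m = 2 ^ j * (h m - ln (real m + 1) - 2)"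
      unfolding Breal c_def by simp
    moreover have "ln (real m + 1) + real j + 2 \<ge> 0" by simp
    ultimately show ?thesis using dbl[where m=m and j=j] by linarith
  qed
  have Bex: "\<exists>j. B m j \<le> n \<and> n < B m (Suc j)" if "m \<le> n" for m n
  proof -
    have "n < B m (Suc n)"
    proof -
      have "n + 1 < 2 ^ Suc n" using less_exp[of n] by (simp; linarith)
      also have "\<dots> \<le> 2 ^ Suc n * (m + 1)" by simp
      finally show ?thesis unfolding B_def by (simp add: less_diff_conv)
    qed
    then have ex: "\<exists>j. n < B m j" by blast
    define J where "J = (LEAST j. n < B m j)"
    have J1: "n < B m J" unfolding J_def by (rule LeastI_ex[OF ex])
    have J0: "J \<noteq> 0"
    proof
      assume "J = 0" then have "n < m" using J1 B0 by simp
      then show False using that by simp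
    qed
    then obtain j where j: "J = Suc j" by (cases J) auto
    have "\<not> n < B m j" unfolding J_def
      by (rule not_less_Least) (use j J_def in simp)
    then show ?thesis using J1 j by (auto simp: not_less)
  qed
  have P: "h n \<ge> c m * real n - real k * (\<bar>c m\<bar> + ln (real n + 1)) - (real m * real m + \<bar>c m\<bar> * (real m + 1))"
    if "n < 2 ^ k" for m n k
    by (rule growth[of h "B m" "c m" m, OF sup low D _ BS that]) (use Bex in blast)
  have ev: "\<forall>\<^sub>F n in sequentially. c m - e < h n / real n" if e: "e > 0" for m e
  proof -
    define \<mu> where "\<mu> = c m"
    define K where "K = real m * real m + \<bar>\<mu>\<bar> * (real m + 1)"
    define E where "E n = ((ln (real n + 1) / ln 2 + 1) * (\<bar>\<mu>\<bar> + ln (real n + 1)) + K) / real n" for n :: nat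
    have "E \<longlonglongrightarrow> 0"
    proof -
      have t1: "(\<lambda>n::nat. ln (real n + 1) / ln 2 * ln (real n + 1) / real n) \<longlonglongrightarrow> 0" by real_asymp
      have t2: "(\<lambda>n::nat. ln (real n + 1) / ln 2 / real n) \<longlonglongrightarrow> 0" by real_asymp
      have t3: "(\<lambda>n::nat. ln (real n + 1) / real n) \<longlonglongrightarrow> 0" by real_asymp
      have t4: "(\<lambda>n::nat. 1 / real n) \<longlonglongrightarrow> 0" by real_asymp
      have "(\<lambda>n. ln (real n + 1) / ln 2 * ln (real n + 1) / real n + \<bar>\<mu>\<bar> * (ln (real n + 1) / ln 2 / real n)
          + ln (real n + 1) / real n + (\<bar>\<mu>\<bar> + K) * (1 / real n)) \<longlonglongrightarrow> 0 + \<bar>\<mu>\<bar> * 0 + 0 + (\<bar>\<mu>\<bar> + K) * 0"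
        by (intro tendsto_intros t1 t2 t3 t4)
      moreover have eqE: "E n = ln (real n + 1) / ln 2 * ln (real n + 1) / real n + \<bar>\<mu>\<bar> * (ln (real n + 1) / ln 2 / real n)
          + ln (real n + 1) / real n + (\<bar>\<mu>\<bar> + K) * (1 / real n)" for n
      proof (cases "n = 0")
        case True then show ?thesis unfolding E_def by simp
      next
        case False
        have "ln (2::real) > 0" by simp
        then show ?thesis unfolding E_def using False by (simp add: field_simps)
      qed
      then have "E = (\<lambda>n. ln (real n + 1) / ln 2 * ln (real n + 1) / real n + \<bar>\<mu>\<bar> * (ln (real n + 1) / ln 2 / real n)
          + ln (real n + 1) / real n + (\<bar>\<mu>\<bar> + K) * (1 / real n))" by (intro ext)
      ultimately show ?thesis by simp
    qed
    then have "\<forall>\<^sub>F n in sequentially. E n < e" using e by (simp add: order_tendsto_iff)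
    moreover have "\<forall>\<^sub>F n in sequentially. n \<ge> 1" by (simp add: eventually_ge_at_top)
    ultimately show ?thesis
    proof (rule eventually_elim2)
      fix n :: nat assume En: "E n < e" and n1: "n \<ge> 1"
      define k where "k = nat \<lceil>log 2 (real n + 1)\<rceil>"
      have nk: "n < 2 ^ k" and kb0: "real k \<le> log 2 (real n + 1) + 1" using log_k_bound[of n] unfolding k_def by auto
      have kb: "real k \<le> ln (real n + 1) / ln 2 + 1" using kb0 by (simp add: log_def)
      have Pn: "h n \<ge> \<mu> * real n - real k * (\<bar>\<mu>\<bar> + ln (real n + 1)) - K"
        using P[OF nk, of m] unfolding \<mu>_def K_def by simp
      have "real k * (\<bar>\<mu>\<bar> + ln (real n + 1)) \<le> (ln (real n + 1) / ln 2 + 1) * (\<bar>\<mu>\<bar> + ln (real n + 1))"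
        using kb by (intro mult_right_mono) auto
      moreover have "E n * real n = (ln (real n + 1) / ln 2 + 1) * (\<bar>\<mu>\<bar> + ln (real n + 1)) + K"
        unfolding E_def using n1 by simp
      ultimately have "h n \<ge> \<mu> * real n - E n * real n" using Pn by linarith
      then have "h n / real n \<ge> \<mu> - E n" using n1 by (simp add: field_simps)
      then show "c m - e < h n / real n" using En unfolding \<mu>_def by linarith
    qed
  qed
  have bdd: "bdd_above (range c)"
  proof (rule bdd_aboveI)
    fix x assume "x \<in> range c"
    then obtain m where x: "x = c m" by blast
    have "ln (real m + 1) \<ge> 0" by simp
    then have "h m - ln (real m + 1) - 2 \<le> real m + 1" using up[of m] by linarith
    then show "x \<le> 1" unfolding x c_def by (simp add: divide_le_eq_1)
  qed
  define L where "L = (SUP m. c m)"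
  have "(\<lambda>n. h n / real n) \<longlonglongrightarrow> L"
  proof (rule order_tendstoI)
    fix a assume "a < L"
    then obtain m where m: "a < c m" unfolding L_def using less_cSUP_iff[OF _ bdd] by auto
    have "\<forall>\<^sub>F n in sequentially. c m - (c m - a) < h n / real n" by (rule ev) (use m in simp)
    then show "\<forall>\<^sub>F n in sequentially. a < h n / real n" by simp
  next
    fix a assume aL: "L < a"
    define \<delta> where "\<delta> n = 1 / real n + (ln (real n + 1) + 2) / (real n + 1)" for n :: nat
    have "\<delta> \<longlonglongrightarrow> 0" unfolding \<delta>_def by real_asymp
    then have "\<forall>\<^sub>F n in sequentially. \<delta> n < a - L" using aL by (simp add: order_tendsto_iff)
    moreover have "\<forall>\<^sub>F n in sequentially. n \<ge> 1" by (simp add: eventually_ge_at_top)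
    ultimately show "\<forall>\<^sub>F n in sequentially. h n / real n < a"
    proof (rule eventually_elim2)
      fix n :: nat assume dn: "\<delta> n < a - L" and n1: "n \<ge> 1"
      have cL: "c n \<le> L" unfolding L_def by (rule cSUP_upper[OF _ bdd]) simp
      have eq: "h n / real n - c n = h n / (real n * (real n + 1)) + (ln (real n + 1) + 2) / (real n + 1)"
      proof -
        have n0: "real n > 0" using n1 by simp
        have n2: "real n + 1 > 0" by simp
        have a1: "c n = h n / (real n + 1) - (ln (real n + 1) + 2) / (real n + 1)"
          unfolding c_def by (simp add: diff_divide_distrib add_divide_distrib)
        have a2: "h n / real n - h n / (real n + 1) = h n / (real n * (real n + 1))"
          using n0 n2 by (simp add: divide_simps) (simp add: algebra_simps)
        show ?thesis using a1 a2 by simp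
      qed
      have "h n / (real n * (real n + 1)) \<le> (real n + 1) / (real n * (real n + 1))"
        using up[of n] n1 by (intro divide_right_mono) auto
      also have "\<dots> = 1 / real n" using n1 by simp
      finally have "h n / real n - c n \<le> \<delta> n" unfolding eq \<delta>_def by simp
      then show "h n / real n < a" using dn cL by linarith
    qed
  qed
  then show ?thesis by blast
qed

lemma L1: "(real n + 1) ^ n \<le> exp 1 * real n ^ n"
proof (cases "n = 0")
  case True then show ?thesis by simp
next
  case False
  then have n0: "real n > 0" by simp
  have "real n + 1 = real n * (1 + 1 / real n)" using n0 by (simp add: field_simps)
  also have "\<dots> \<le> real n * exp (1 / real n)" using n0 by (intro mult_left_mono) auto
  finally have "(real n + 1) ^ n \<le> (real n * exp (1 / real n)) ^ n" by (intro power_mono) auto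
  also have "\<dots> = real n ^ n * exp (1 / real n) ^ n" by (simp add: power_mult_distrib)
  also have "exp (1 / real n) ^ n = exp (real n * (1 / real n))" by (rule exp_of_nat_mult[symmetric])
  also have "\<dots> = exp 1" using n0 by simp
  finally show ?thesis by (simp add: mult.commute)
qed

lemma F1: "real n ^ n \<le> exp (real n) * fact n"
proof (induction n)
  case 0 then show ?case by simp
next
  case (Suc n)
  have "real (Suc n) ^ Suc n = (real n + 1) * (real n + 1) ^ n" by (simp add: add.commute)
  also have "\<dots> \<le> (real n + 1) * (exp 1 * real n ^ n)" by (intro mult_left_mono L1) auto
  also have "\<dots> \<le> (real n + 1) * (exp 1 * (exp (real n) * fact n))"
    by (intro mult_left_mono Suc.IH) auto
  also have "\<dots> = exp (real (Suc n)) * fact (Suc n)" by (simp add: exp_add algebra_simps)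
  finally show ?case .
qed

lemma L2:
  assumes "n \<ge> 1"
  shows "exp 1 * real n ^ (n + 1) \<le> (real n + 1) ^ (n + 1)"
proof -
  have n0: "real n > 0" using assms by simp
  have "1 - 1 / (real n + 1) \<le> exp (- (1 / (real n + 1)))" using exp_ge_add_one_self[of "- (1 / (real n + 1))"] by simp
  moreover have "1 - 1 / (real n + 1) = real n / (real n + 1)" by (simp add: field_simps)
  ultimately have "real n / (real n + 1) \<le> exp (- (1 / (real n + 1)))" by simp
  then have "real n \<le> (real n + 1) * exp (- (1 / (real n + 1)))" by (simp add: field_simps)
  then have "exp (1 / (real n + 1)) * real n \<le> real n + 1"
    by (simp add: exp_minus field_simps)
  then have A: "(exp (1 / (real n + 1)) * real n) ^ (n + 1) \<le> (real n + 1) ^ (n + 1)"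
    by (intro power_mono) auto
  have Beq: "(exp (1 / (real n + 1)) * real n) ^ (n + 1) = exp 1 * real n ^ (n + 1)"
  proof -
    have "exp (1 / (real n + 1)) ^ (n + 1) = exp (real (n + 1) * (1 / (real n + 1)))"
      by (rule exp_of_nat_mult[symmetric])
    also have "\<dots> = exp 1" by simp
    finally show ?thesis by (simp add: power_mult_distrib)
  qed
  show ?thesis using A Beq by linarith
qed

lemma F2:
  assumes "n \<ge> 1"
  shows "fact n * exp (real n - 1) \<le> real n ^ (n + 1)"
  using assms
proof (induction n rule: dec_induct)
  case base then show ?case by simp
next
  case (step n)
  have "fact (Suc n) * exp (real (Suc n) - 1) = (real n + 1) * (exp 1 * (fact n * exp (real n - 1)))"
    by (simp add: exp_add[symmetric] algebra_simps)
  also have "\<dots> \<le> (real n + 1) * (exp 1 * real n ^ (n + 1))"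
    by (intro mult_left_mono step.IH) auto
  also have "\<dots> \<le> (real n + 1) * (real n + 1) ^ (n + 1)"
    by (intro mult_left_mono L2 step.hyps) auto
  also have "\<dots> = real (Suc n) ^ (Suc n + 1)" by (simp add: add.commute)
  finally show ?case .
qed

lemma lnfact_lim: "(\<lambda>n. ln (fact n) / real n - ln (real n)) \<longlonglongrightarrow> -1"
proof (rule real_tendsto_sandwich[where f = "\<lambda>n. -1" and h = "\<lambda>n. -1 + (1 + ln (real n)) / real n"])
  show "\<forall>\<^sub>F n in sequentially. -1 \<le> ln (fact n) / real n - ln (real n)"
    using eventually_ge_at_top[of "1::nat"]
  proof (rule eventually_mono)
    fix n :: nat assume n1: "n \<ge> 1"
    have n0: "real n > 0" using n1 by simp
    have "ln (real n ^ n) \<le> ln (exp (real n) * fact n)" using F1[of n] n0 by simp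
    moreover have "ln (real n ^ n) = real n * ln (real n)" by (rule ln_realpow)
    moreover have "ln (exp (real n) * fact n) = real n + ln (fact n)" by (simp add: ln_mult_pos)
    ultimately have "real n * ln (real n) \<le> real n + ln (fact n)" by simp
    then show "-1 \<le> ln (fact n) / real n - ln (real n)" using n0 by (simp add: field_simps)
  qed
  show "\<forall>\<^sub>F n in sequentially. ln (fact n) / real n - ln (real n) \<le> -1 + (1 + ln (real n)) / real n"
    using eventually_ge_at_top[of "1::nat"]
  proof (rule eventually_mono)
    fix n :: nat assume n1: "n \<ge> 1"
    have n0: "real n > 0" using n1 by simp
    have A: "ln (fact n * exp (real n - 1)) \<le> ln (real n ^ (n + 1))" using F2[OF n1] n0 by simp
    have B1: "ln (real n ^ (n + 1)) = real (n + 1) * ln (real n)" by (rule ln_realpow)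
    have B2: "ln (fact n * exp (real n - 1)) = ln (fact n) + (real n - 1)" by (simp add: ln_mult_pos)
    have "ln (fact n) + (real n - 1) \<le> (real n + 1) * ln (real n)"
      using A unfolding B1 B2 of_nat_add of_nat_1 .
    then have num: "ln (fact n) - real n * ln (real n) \<le> 1 + ln (real n) - real n"
      by (simp add: algebra_simps)
    have e1: "ln (fact n) / real n - ln (real n) = (ln (fact n) - real n * ln (real n)) / real n"
      using n0 by (simp add: field_simps)
    have e2: "-1 + (1 + ln (real n)) / real n = (1 + ln (real n) - real n) / real n"
      using n0 by (simp add: field_simps)
    show "ln (fact n) / real n - ln (real n) \<le> -1 + (1 + ln (real n)) / real n"
      unfolding e1 e2 using num n0 by (intro divide_right_mono) auto
  qed
  show "(\<lambda>n. -1) \<longlonglongrightarrow> (-1::real)" by simp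
  show "(\<lambda>n. -1 + (1 + ln (real n)) / real n) \<longlonglongrightarrow> (-1::real)" by real_asymp
qed

lemma root_exp:
  assumes "n \<ge> 1" "x \<ge> 1"
  shows "root n x / real n = exp (ln x / real n - ln (real n))"
proof -
  have "root n x = x powr (1 / real n)" using assms by (simp add: root_powr_inverse)
  also have "\<dots> = exp (ln x / real n)" using assms by (simp add: powr_def)
  finally show ?thesis using assms by (simp add: exp_diff)
qed

lemma analytic:
  fixes a b :: "nat \<Rightarrow> nat"
  assumes a1: "\<And>n. 1 \<le> a n" and aub: "\<And>n. a n \<le> (n+1)^n"
    and sup: "\<And>p q. (p+q choose p) * a p * a q \<le> a (p+q+1)"
    and tb: "\<And>n. b n \<le> a n" and ta: "\<And>n. a n \<le> b (n+1)"
  shows "\<exists>L. (\<lambda>n. root n (real (a n)) / real n) \<longlonglongrightarrow> L \<and> (\<lambda>n. root n (real (b n)) / real n) \<longlonglongrightarrow> L"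
proof -
  define h where "h n = ln (real (a n)) - ln (fact n)" for n
  have apos: "real (a n) \<ge> 1" for n using a1[of n] by simp
  have H1: "h p + h q - ln (real (p + q + 1)) \<le> h (p + q + 1)" for p q
  proof -
    have "real ((p+q choose p) * a p * a q) \<le> real (a (p+q+1))" using sup[of p q] by (simp only: of_nat_le_iff)
    then have le: "real (p+q choose p) * real (a p) * real (a q) \<le> real (a (p+q+1))" by simp
    have C: "real (p+q choose p) = fact (p+q) / (fact p * fact q)" using binomial_fact[of p "p+q"] by simp
    have Cpos: "real (p+q choose p) > 0" by simp
    have "ln (real (p+q choose p) * real (a p) * real (a q)) \<le> ln (real (a (p+q+1)))"
      using le Cpos apos[of p] apos[of q] apos[of "p+q+1"] by (subst ln_le_cancel_iff) auto
    moreover have "ln (real (p+q choose p) * real (a p) * real (a q)) = ln (real (p+q choose p)) + ln (real (a p)) + ln (real (a q))"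
      using Cpos apos[of p] apos[of q] by (simp add: ln_mult)
    moreover have "ln (real (p+q choose p)) = ln (fact (p+q)) - ln (fact p) - ln (fact q)"
      unfolding C by (simp add: ln_div ln_mult)
    moreover have "ln (fact (p+q+1) :: real) = ln (real (p+q+1)) + ln (fact (p+q))"
      by (simp add: ln_mult)
    ultimately show ?thesis unfolding h_def by simp
  qed
  have H2: "h n \<le> real n + 1" for n
  proof -
    have "real (a n) \<le> (real n + 1) ^ n" using aub[of n] by (metis of_nat_1 of_nat_add of_nat_le_iff of_nat_power)
    also have "\<dots> \<le> exp 1 * real n ^ n" by (rule L1)
    also have "\<dots> \<le> exp 1 * (exp (real n) * fact n)" by (intro mult_left_mono F1) auto
    finally have "real (a n) \<le> exp (real n + 1) * fact n" by (simp add: exp_add algebra_simps)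
    then have "ln (real (a n)) \<le> ln (exp (real n + 1) * fact n)" using apos[of n] by simp
    then show ?thesis unfolding h_def by (simp add: ln_mult)
  qed
  have H3: "- (real n * real n) \<le> h n" for n
  proof -
    have "fact n \<le> (real n) ^ n" using fact_le_power[of n] by simp
    also have "\<dots> \<le> exp (real n) ^ n" by (intro power_mono) (auto simp: order.trans[OF _ exp_ge_add_one_self])
    also have "\<dots> = exp (real n * real n)" by (simp add: exp_of_nat_mult)
    finally have "fact n \<le> exp (real n * real n)" .
    then have "ln (fact n) \<le> ln (exp (real n * real n))" by (subst ln_le_cancel_iff) auto
    then have "ln (fact n) \<le> real n * real n" by simp
    moreover have "ln (real (a n)) \<ge> 0" using apos[of n] by simp
    ultimately show ?thesis unfolding h_def by simp
  qed
  obtain \<Lambda> where Lam: "(\<lambda>n. h n / real n) \<longlonglongrightarrow> \<Lambda>" using core[of h, OF H1 H2 H3] by blast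
  define g where "g n = ln (real (a n)) / real n - ln (real n)" for n
  have g_eq: "g n = h n / real n + (ln (fact n) / real n - ln (real n))" for n
    unfolding g_def h_def by (simp add: diff_divide_distrib)
  have glim: "g \<longlonglongrightarrow> \<Lambda> + -1" unfolding g_eq[abs_def] by (intro tendsto_add Lam lnfact_lim)
  have r1: "(\<lambda>n. root n (real (a n)) / real n) \<longlonglongrightarrow> exp (\<Lambda> - 1)"
  proof -
    have "(\<lambda>n. exp (g n)) \<longlonglongrightarrow> exp (\<Lambda> + -1)" by (intro tendsto_exp glim)
    moreover have "\<forall>\<^sub>F n in sequentially. exp (g n) = root n (real (a n)) / real n"
      using eventually_ge_at_top[of "1::nat"]
    proof (rule eventually_mono)
      fix n :: nat assume n1: "n \<ge> 1"
      show "exp (g n) = root n (real (a n)) / real n" using root_exp[OF n1 apos[of n]] by (simp add: g_def)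
    qed
    ultimately have "(\<lambda>n. root n (real (a n)) / real n) \<longlonglongrightarrow> exp (\<Lambda> + -1)"
      by (rule Lim_transform_eventually)
    then show ?thesis by simp
  qed
  define \<psi> where "\<psi> n = ln (real (b n)) / real n - ln (real n)" for n
  have bpos: "real (b n) \<ge> 1" if "n \<ge> 1" for n
  proof -
    have nm: "n = (n - 1) + 1" using that by simp
    have "a (n - 1) \<le> b n" using ta[of "n - 1"] nm by simp
    then show ?thesis using a1[of "n - 1"] by simp
  qed
  have psi_up: "\<psi> n \<le> g n" if "n \<ge> 1" for n
  proof -
    have "ln (real (b n)) \<le> ln (real (a n))" using tb[of n] bpos[OF that] by simp
    then have "ln (real (b n)) / real n \<le> ln (real (a n)) / real n" by (rule divide_right_mono) simp
    then show ?thesis unfolding \<psi>_def g_def by linarith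
  qed
  define lo where "lo n = ln (real (a n)) / real (Suc n) - ln (real (Suc n))" for n
  have psi_lo: "lo n \<le> \<psi> (Suc n)" for n
  proof -
    have "ln (real (a n)) \<le> ln (real (b (Suc n)))" using ta[of n] apos[of n] by simp
    then have "ln (real (a n)) / real (Suc n) \<le> ln (real (b (Suc n))) / real (Suc n)"
      by (rule divide_right_mono) simp
    then show ?thesis unfolding \<psi>_def lo_def by linarith
  qed
  have lo_lim: "lo \<longlonglongrightarrow> \<Lambda> + -1"
  proof -
    have w: "(\<lambda>n::nat. real n / (real n + 1) * ln (real n) - ln (real n + 1)) \<longlonglongrightarrow> 0" by real_asymp
    have q: "(\<lambda>n::nat. real n / (real n + 1)) \<longlonglongrightarrow> 1" by real_asymp
    have "(\<lambda>n. real n / (real n + 1) * g n + (real n / (real n + 1) * ln (real n) - ln (real n + 1)))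
          \<longlonglongrightarrow> 1 * (\<Lambda> + -1) + 0"
      by (intro tendsto_add tendsto_mult q glim w)
    moreover have "\<forall>\<^sub>F n in sequentially. real n / (real n + 1) * g n + (real n / (real n + 1) * ln (real n) - ln (real n + 1)) = lo n"
      using eventually_ge_at_top[of "1::nat"]
    proof (rule eventually_mono)
      fix n :: nat assume n1: "n \<ge> 1"
      have n0: "real n > 0" using n1 by simp
      show "real n / (real n + 1) * g n + (real n / (real n + 1) * ln (real n) - ln (real n + 1)) = lo n"
      proof -
        have n2: "real n + 1 > 0" by simp
        have s1: "g n = (ln (real (a n)) - real n * ln (real n)) / real n"
          unfolding g_def using n0 by (simp add: diff_divide_distrib)
        have s2: "real n / (real n + 1) * g n = (ln (real (a n)) - real n * ln (real n)) / (real n + 1)"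
          unfolding s1 using n0 by simp
        have s3: "(ln (real (a n)) - real n * ln (real n)) / (real n + 1) + (real n / (real n + 1) * ln (real n) - ln (real n + 1))
            = ln (real (a n)) / (real n + 1) - ln (real n + 1)"
          using n2 by (simp add: diff_divide_distrib)
        show ?thesis unfolding s2 lo_def of_nat_Suc using s3 by (simp add: add.commute)
      qed
    qed
    ultimately have "lo \<longlonglongrightarrow> 1 * (\<Lambda> + -1) + 0" by (rule Lim_transform_eventually)
    then show ?thesis by simp
  qed
  have psiS: "(\<lambda>n. \<psi> (Suc n)) \<longlonglongrightarrow> \<Lambda> + -1"
  proof (rule real_tendsto_sandwich[OF _ _ lo_lim])
    show "\<forall>\<^sub>F n in sequentially. lo n \<le> \<psi> (Suc n)" using psi_lo by simp
    show "\<forall>\<^sub>F n in sequentially. \<psi> (Suc n) \<le> g (Suc n)" using psi_up by simp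
    show "(\<lambda>n. g (Suc n)) \<longlonglongrightarrow> \<Lambda> + -1" using glim by (simp add: filterlim_sequentially_Suc)
  qed
  then have psil: "\<psi> \<longlonglongrightarrow> \<Lambda> + -1" by (simp add: filterlim_sequentially_Suc)
  have r2: "(\<lambda>n. root n (real (b n)) / real n) \<longlonglongrightarrow> exp (\<Lambda> - 1)"
  proof -
    have "(\<lambda>n. exp (\<psi> n)) \<longlonglongrightarrow> exp (\<Lambda> + -1)" by (intro tendsto_exp psil)
    moreover have "\<forall>\<^sub>F n in sequentially. exp (\<psi> n) = root n (real (b n)) / real n"
      using eventually_ge_at_top[of "1::nat"]
    proof (rule eventually_mono)
      fix n :: nat assume n1: "n \<ge> 1"
      show "exp (\<psi> n) = root n (real (b n)) / real n" using root_exp[OF n1 bpos[OF n1]] by (simp add: \<psi>_def)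
    qed
    ultimately have "(\<lambda>n. root n (real (b n)) / real n) \<longlonglongrightarrow> exp (\<Lambda> + -1)"
      by (rule Lim_transform_eventually)
    then show ?thesis by simp
  qed
  show ?thesis using r1 r2 by blast
qed

theorem theorem1p9:
  fixes S :: "nat list set"
  assumes "\<forall>pat \<in> S. is_pattern pat"
    and "(\<forall>pat \<in> S. hd pat \<noteq> 1) \<or> (\<forall>pat \<in> S. hd pat \<noteq> length pat)"
  shows "\<exists>L::real.
           (\<lambda>n. root n (real (f_count S n)) / real n) \<longlonglongrightarrow> L \<and>
           (\<lambda>n. root n (real (t_count S n)) / real n) \<longlonglongrightarrow> L"
proof -
  note c = comb_facts[OF assms]
  show ?thesis
    by (rule analytic[of "f_count S" "t_count S", OF c(1)[rule_format] c(2)[rule_format]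
          c(3)[rule_format] c(4)[rule_format] c(5)[rule_format]])
qed

end
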